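(* Let $W\in\mathbb{D}_n$ be a Dale matrix with excitatory neurons $\mathcal{E}$ and inhibitory neurons $\mathcal{I}$. Let $m=|\mathcal{E}|+1$, identify the first $m-1$ indices of $[m]$ with $\mathcal{E}$ and let index $m$ be a single inhibitory neuron. Let $W'\in\mathbb{D}_m$ be any Dale matrix (with excitatory set $\mathcal{E}$ and inhibitory set $\{m\}$) such that $W'_{\mathcal{E}}=W_{\mathcal{E}}$ (the principal submatrices on $\mathcal{E}$ agree) and, for all $i\in\mathcal{E}$, $$W'_{im}=\begin{cases}-1,&\text{if there is } j\in\mathcal{I}\text{ with } W_{ij}\neq 0,\\ 0,&\text{if } W_{ij}=0 \text{ for all } j\in\mathcal{I}.\end{cases}$$ Assume both $W$ and $W'$ satisfy the Ground Assumption. Then $\mathcal{C}(W)=\mathcal{C}(W')$.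
   Context: Threshold-linear network: for $W\in\mathbb{R}^{n\times n}$ and $b\in\mathbb{R}^n$, the dynamics are $\dot x_i=-x_i+[\sum_{j=1}^n W_{ij}x_j+b_i]_+$, $i=1,\dots,n$, where $[y]_+=\max(0,y)$. A fixed point is $x^*\in\mathbb{R}^n$ with $x^*=[Wx^*+b]_+$ (componentwise). A Dale matrix $W\in\mathbb{D}_n$ is an $n\times n$ real matrix together with a partition $[n]=\mathcal{E}\sqcup\mathcal{I}$ into excitatory and inhibitory neurons such that $W_{ii}=0$ for all $i$, $W_{ji}\ge 0$ for all $j$ whenever $i\in\mathcal{E}$, and $W_{ji}\le 0$ for all $j$ whenever $i\in\mathcal{I}$. Ground Assumption: for every nonempty $\sigma\subset[n]$ the principal submatrix $(I-W)_\sigma$ is nonsingular. For $x\in\mathbb{R}^n_{\ge0}$, its excitatory support is $\mathrm{supp}_+x=\{i\in\mathcal{E}: x_i>0\}$. The combinatorial code of $W$ is $\mathcal{C}(W)=\{\mathrm{supp}_+x^*\;:\; b\in\mathbb{R}^n_{\ge0},\ x^*\in\mathbb{R}^n_{\ge 0}\text{ a fixed point of the network }(W,b)\}$. For $\sigma\subset[n]$, $A_\sigma$ denotes the principal submatrix of $A$ on rows and columns $\sigma$. *)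

theory Defs
  imports "HOL-Analysis.Analysis"
begin

text \<open>Matrices are indexed by a finite index set S (neurons); W i j is the entry in row i,
  column j. Vectors are functions on indices; only values on S matter.\<close>

definition dale_matrix :: "'a set \<Rightarrow> 'a set \<Rightarrow> ('a \<Rightarrow> 'a \<Rightarrow> real) \<Rightarrow> bool" where
  "dale_matrix S E W \<longleftrightarrow> finite S \<and> E \<subseteq> S \<and>
     (\<forall>i\<in>S. W i i = 0) \<and>
     (\<forall>i\<in>E. \<forall>j\<in>S. W j i \<ge> 0) \<and>
     (\<forall>i\<in>S - E. \<forall>j\<in>S. W j i \<le> 0)"

definition det_on :: "'a set \<Rightarrow> ('a \<Rightarrow> 'a \<Rightarrow> real) \<Rightarrow> real" where
  "det_on \<sigma> A = (\<Sum>p\<in>{p. p permutes \<sigma>}. of_int (sign p) * (\<Prod>i\<in>\<sigma>. A i (p i)))"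

definition ground_assumption :: "'a set \<Rightarrow> ('a \<Rightarrow> 'a \<Rightarrow> real) \<Rightarrow> bool" where
  "ground_assumption S W \<longleftrightarrow>
     (\<forall>\<sigma>. \<sigma> \<noteq> {} \<and> \<sigma> \<subseteq> S \<longrightarrow>
        det_on \<sigma> (\<lambda>i j. (if i = j then 1 else 0) - W i j) \<noteq> 0)"

definition is_fixed_point :: "'a set \<Rightarrow> ('a \<Rightarrow> 'a \<Rightarrow> real) \<Rightarrow> ('a \<Rightarrow> real) \<Rightarrow> ('a \<Rightarrow> real) \<Rightarrow> bool" where
  "is_fixed_point S W b x \<longleftrightarrow>
     (\<forall>i\<in>S. x i = max 0 ((\<Sum>j\<in>S. W i j * x j) + b i))"

definition exc_support :: "'a set \<Rightarrow> ('a \<Rightarrow> real) \<Rightarrow> 'a set" where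
  "exc_support E x = {i\<in>E. x i > 0}"

definition comb_code :: "'a set \<Rightarrow> 'a set \<Rightarrow> ('a \<Rightarrow> 'a \<Rightarrow> real) \<Rightarrow> 'a set set" where
  "comb_code S E W = {exc_support E x | x b.
      (\<forall>i\<in>S. b i \<ge> 0) \<and> (\<forall>i\<in>S. x i \<ge> 0) \<and> is_fixed_point S W b x}"

end

theory Submission
  imports Defs
begin

lemma lem1:
  "comb_code S E W = {exc_support E x | x. (\<forall>i\<in>S. 0 \<le> x i) \<and> (\<forall>i\<in>S. (\<Sum>j\<in>S. W i j * x j) \<le> x i)}"
proof
  show "comb_code S E W \<subseteq> {exc_support E x | x. (\<forall>i\<in>S. 0 \<le> x i) \<and> (\<forall>i\<in>S. (\<Sum>j\<in>S. W i j * x j) \<le> x i)}"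
  proof
    fix \<sigma> assume "\<sigma> \<in> comb_code S E W"
    then obtain x b where s: "\<sigma> = exc_support E x" and b: "\<forall>i\<in>S. b i \<ge> 0"
      and x: "\<forall>i\<in>S. x i \<ge> 0" and fp: "is_fixed_point S W b x"
      unfolding comb_code_def by blast
    have "\<forall>i\<in>S. (\<Sum>j\<in>S. W i j * x j) \<le> x i"
    proof
      fix i assume i: "i \<in> S"
      have "x i = max 0 ((\<Sum>j\<in>S. W i j * x j) + b i)" using fp i unfolding is_fixed_point_def by blast
      moreover have "b i \<ge> 0" using b i by blast
      ultimately show "(\<Sum>j\<in>S. W i j * x j) \<le> x i" by linarith
    qed
    then show "\<sigma> \<in> {exc_support E x | x. (\<forall>i\<in>S. 0 \<le> x i) \<and> (\<forall>i\<in>S. (\<Sum>j\<in>S. W i j * x j) \<le> x i)}"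
      using s x by blast
  qed
next
  show "{exc_support E x | x. (\<forall>i\<in>S. 0 \<le> x i) \<and> (\<forall>i\<in>S. (\<Sum>j\<in>S. W i j * x j) \<le> x i)} \<subseteq> comb_code S E W"
  proof
    fix \<sigma> assume "\<sigma> \<in> {exc_support E x | x. (\<forall>i\<in>S. 0 \<le> x i) \<and> (\<forall>i\<in>S. (\<Sum>j\<in>S. W i j * x j) \<le> x i)}"
    then obtain x where s: "\<sigma> = exc_support E x" and x: "\<forall>i\<in>S. 0 \<le> x i"
      and w: "\<forall>i\<in>S. (\<Sum>j\<in>S. W i j * x j) \<le> x i" by blast
    define b where "b i = x i - (\<Sum>j\<in>S. W i j * x j)" for i
    have "\<forall>i\<in>S. b i \<ge> 0" using w unfolding b_def by auto
    moreover have "is_fixed_point S W b x" unfolding is_fixed_point_def b_def using x by auto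
    ultimately show "\<sigma> \<in> comb_code S E W" unfolding comb_code_def using s x by blast
  qed
qed

lemma lem2:
  assumes d: "dale_matrix S E W"
  shows "{exc_support E x | x. (\<forall>i\<in>S. 0 \<le> x i) \<and> (\<forall>i\<in>S. (\<Sum>j\<in>S. W i j * x j) \<le> x i)}
    = {exc_support E x | x. (\<forall>i\<in>E. 0 \<le> x i) \<and> (\<forall>i\<in>E. (\<forall>j\<in>S-E. W i j = 0) \<longrightarrow> (\<Sum>j\<in>E. W i j * x j) \<le> x i)}"
proof -
  have fin: "finite S" and ES: "E \<subseteq> S" and neg: "\<forall>i\<in>S - E. \<forall>j\<in>S. W j i \<le> 0"
    using d unfolding dale_matrix_def by auto
  have split: "(\<Sum>j\<in>S. f j) = (\<Sum>j\<in>E. f j) + (\<Sum>j\<in>S-E. f j)" for f :: "'a \<Rightarrow> real"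
    using sum.subset_diff[OF ES fin, of f] by simp
  show ?thesis
  proof
    show "{exc_support E x | x. (\<forall>i\<in>S. 0 \<le> x i) \<and> (\<forall>i\<in>S. (\<Sum>j\<in>S. W i j * x j) \<le> x i)}
    \<subseteq> {exc_support E x | x. (\<forall>i\<in>E. 0 \<le> x i) \<and> (\<forall>i\<in>E. (\<forall>j\<in>S-E. W i j = 0) \<longrightarrow> (\<Sum>j\<in>E. W i j * x j) \<le> x i)}"
    proof
      fix \<sigma> assume "\<sigma> \<in> {exc_support E x | x. (\<forall>i\<in>S. 0 \<le> x i) \<and> (\<forall>i\<in>S. (\<Sum>j\<in>S. W i j * x j) \<le> x i)}"
      then obtain x where s: "\<sigma> = exc_support E x" and x: "\<forall>i\<in>S. 0 \<le> x i"
        and w: "\<forall>i\<in>S. (\<Sum>j\<in>S. W i j * x j) \<le> x i" by blast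
      have "\<forall>i\<in>E. (\<forall>j\<in>S-E. W i j = 0) \<longrightarrow> (\<Sum>j\<in>E. W i j * x j) \<le> x i"
      proof (intro ballI impI)
        fix i assume i: "i \<in> E" and z: "\<forall>j\<in>S-E. W i j = 0"
        have "(\<Sum>j\<in>S-E. W i j * x j) = 0" using z by simp
        then show "(\<Sum>j\<in>E. W i j * x j) \<le> x i" using w i ES split[of "\<lambda>j. W i j * x j"] by force
      qed
      then show "\<sigma> \<in> {exc_support E x | x. (\<forall>i\<in>E. 0 \<le> x i) \<and> (\<forall>i\<in>E. (\<forall>j\<in>S-E. W i j = 0) \<longrightarrow> (\<Sum>j\<in>E. W i j * x j) \<le> x i)}"
        using s x ES by blast
    qed
  next
    show "{exc_support E x | x. (\<forall>i\<in>E. 0 \<le> x i) \<and> (\<forall>i\<in>E. (\<forall>j\<in>S-E. W i j = 0) \<longrightarrow> (\<Sum>j\<in>E. W i j * x j) \<le> x i)}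
     \<subseteq> {exc_support E x | x. (\<forall>i\<in>S. 0 \<le> x i) \<and> (\<forall>i\<in>S. (\<Sum>j\<in>S. W i j * x j) \<le> x i)}"
    proof
      fix \<sigma> assume "\<sigma> \<in> {exc_support E x | x. (\<forall>i\<in>E. 0 \<le> x i) \<and> (\<forall>i\<in>E. (\<forall>j\<in>S-E. W i j = 0) \<longrightarrow> (\<Sum>j\<in>E. W i j * x j) \<le> x i)}"
      then obtain x where s: "\<sigma> = exc_support E x" and x: "\<forall>i\<in>E. 0 \<le> x i"
        and w: "\<forall>i\<in>E. (\<forall>j\<in>S-E. W i j = 0) \<longrightarrow> (\<Sum>j\<in>E. W i j * x j) \<le> x i" by blast
      define s0 where "s0 i = (\<Sum>j\<in>E. W i j * x j)" for i
      define c where "c i = (\<Sum>j\<in>S-E. W i j)" for i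
      define M where "M = (\<Sum>i\<in>S. \<bar>s0 i\<bar> + \<bar>s0 i\<bar> / \<bar>c i\<bar>)"
      define x' where "x' j = (if j \<in> E then x j else M)" for j
      have Mb: "\<bar>s0 i\<bar> + \<bar>s0 i\<bar> / \<bar>c i\<bar> \<le> M" if "i \<in> S" for i
        unfolding M_def by (rule member_le_sum[OF that _ fin]) auto
      have M0: "0 \<le> M" unfolding M_def by (intro sum_nonneg) auto
      have c0: "c i \<le> 0" if "i \<in> S" for i
        unfolding c_def using neg that by (intro sum_nonpos) auto
      have sumx': "(\<Sum>j\<in>S. W i j * x' j) = s0 i + M * c i" for i
      proof -
        have "(\<Sum>j\<in>E. W i j * x' j) = s0 i" unfolding s0_def x'_def by simp
        moreover have "(\<Sum>j\<in>S-E. W i j * x' j) = M * c i"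
          unfolding c_def x'_def by (simp add: sum_distrib_left mult.commute)
        ultimately show ?thesis using split[of "\<lambda>j. W i j * x' j"] by simp
      qed
      have "\<forall>i\<in>S. (\<Sum>j\<in>S. W i j * x' j) \<le> x' i"
      proof
        fix i assume iS: "i \<in> S"
        show "(\<Sum>j\<in>S. W i j * x' j) \<le> x' i"
        proof (cases "i \<in> E")
          case False
          have "M * c i \<le> 0" using M0 c0[OF iS] by (simp add: mult_nonneg_nonpos)
          moreover have "s0 i \<le> M" using Mb[OF iS] by (smt (verit) divide_nonneg_nonneg abs_ge_zero)
          ultimately show ?thesis using sumx' False unfolding x'_def by simp
        next
          case True
          show ?thesis
          proof (cases "\<forall>j\<in>S-E. W i j = 0")
            case True
            have "c i = 0" unfolding c_def using True by simp
            then show ?thesis using sumx' w \<open>i \<in> E\<close> True unfolding x'_def s0_def by simp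
          next
            case False
            then obtain j0 where j0: "j0 \<in> S - E" "W i j0 \<noteq> 0" by blast
            have "W i j0 \<le> 0" using neg j0 iS by blast
            have "c i = W i j0 + (\<Sum>j\<in>S-E-{j0}. W i j)"
              unfolding c_def using j0 fin by (simp add: sum.remove)
            moreover have "(\<Sum>j\<in>S-E-{j0}. W i j) \<le> 0" using neg iS by (intro sum_nonpos) auto
            ultimately have cneg: "c i < 0" using \<open>W i j0 \<le> 0\<close> j0 by linarith
            have "\<bar>s0 i\<bar> / \<bar>c i\<bar> \<le> M" using Mb[OF iS] by simp
            hence "\<bar>s0 i\<bar> / \<bar>c i\<bar> * \<bar>c i\<bar> \<le> M * \<bar>c i\<bar>" by (rule mult_right_mono) simp
            hence "\<bar>s0 i\<bar> \<le> M * \<bar>c i\<bar>" using cneg by simp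
            hence "s0 i + M * c i \<le> 0" using cneg by (simp add: abs_if split: if_splits)
            then show ?thesis using sumx' x \<open>i \<in> E\<close> unfolding x'_def by fastforce
          qed
        qed
      qed
      moreover have "\<forall>i\<in>S. 0 \<le> x' i" using x M0 unfolding x'_def by auto
      moreover have "exc_support E x' = \<sigma>" unfolding s exc_support_def x'_def by auto
      ultimately show "\<sigma> \<in> {exc_support E x | x. (\<forall>i\<in>S. 0 \<le> x i) \<and> (\<forall>i\<in>S. (\<Sum>j\<in>S. W i j * x j) \<le> x i)}"
        by blast
    qed
  qed
qed

theorem mainTheorem1:
  fixes S E :: "'a set" and k :: 'a and W W' :: "'a \<Rightarrow> 'a \<Rightarrow> real"
  assumes "dale_matrix S E W"
    and "k \<notin> E"
    and "dale_matrix (E \<union> {k}) E W'"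
    and "\<forall>i\<in>E. \<forall>j\<in>E. W' i j = W i j"
    and "\<forall>i\<in>E. W' i k = (if \<exists>j\<in>S - E. W i j \<noteq> 0 then -1 else 0)"
    and "ground_assumption S W"
    and "ground_assumption (E \<union> {k}) W'"
  shows "comb_code S E W = comb_code (E \<union> {k}) E W'"
proof -
  have d: "(E \<union> {k}) - E = {k}" using assms(2) by auto
  have eq: "(\<forall>i\<in>E. (\<forall>j\<in>S-E. W i j = 0) \<longrightarrow> (\<Sum>j\<in>E. W i j * x j) \<le> x i) \<longleftrightarrow>
            (\<forall>i\<in>E. (\<forall>j\<in>(E \<union> {k})-E. W' i j = 0) \<longrightarrow> (\<Sum>j\<in>E. W' i j * x j) \<le> x i)" for x
  proof -
    have "(\<Sum>j\<in>E. W' i j * x j) = (\<Sum>j\<in>E. W i j * x j)" if "i \<in> E" for i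
      using assms(4) that by (intro sum.cong) auto
    moreover have "(\<forall>j\<in>(E \<union> {k})-E. W' i j = 0) \<longleftrightarrow> (\<forall>j\<in>S-E. W i j = 0)" if "i \<in> E" for i
      using assms(5) that d by auto
    ultimately show ?thesis by auto
  qed
  show ?thesis
    unfolding lem1 lem2[OF assms(1)] lem2[OF assms(3)] using eq by simp
qed

end
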